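(* Let $c_q=\gamma\min\big(\frac{\tau_0^2}{2\kappa},\frac{\tau_0}{\kappa_\nabla},\frac{1}{\kappa_{\mathrm{hess}}}\big)$ and suppose $k$ is such that $\|q_k-q^\star\|_2<c_q$. Then $$\mathrm{dist}(\xi,X_k)\le\frac{\kappa_\nabla}{\gamma}\|q_k-q^\star\|_2.$$ Moreover, for each $i\in\{1,\dots,s\}$, letting $B_i=\{x\in\Omega:\|x-\xi_i\|_2\le\tau_0\}$, the set $X_k$ contains at most one point of $B_i$, and $A^*q_k(x)$ has the same (nonzero) sign as $A^*q^\star(\xi_i)$ for all $x\in B_i$.
   Context: Setting: $\Omega\subseteq\mathbb{R}^d$ nonempty open convex; $\mathcal{M}(\Omega)$ finite signed Radon measures with total variation norm $\|\cdot\|_{\mathcal{M}}$, $\mathcal{M}(\Omega')$ those supported in $\Omega'\subseteq\Omega$; $a_1,\dots,a_m\in\mathcal{C}_0(\Omega)\cap\mathcal{C}^2(\Omega)$ with uniformly bounded first and second derivatives; $(A\mu)_i=\int a_i\,d\mu$, $A^*q=\sum_iq_ia_i$. $f:\mathbb{R}^m\to\mathbb{R}$ convex, bounded below, differentiable with $L$-Lipschitz gradient; $f^*$ its conjugate. $J(\mu)=\|\mu\|_{\mathcal{M}}+f(A\mu)$; $(\mathcal{P}(\Omega'))$: $\inf_{\mu\in\mathcal{M}(\Omega')}J(\mu)$; $(\mathcal{D}(\Omega'))$: $\sup\{-f^*(q):|A^*q(x)|\le1\ \forall x\in\Omega'\}$; $(\mathcal{P}),(\mathcal{D})$ for $\Omega'=\Omega$.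 Standing: all these problems used have solutions and no duality gap. Exchange algorithm: given $\Omega_0\subseteq\Omega$, $q_k$ is the solution of $(\mathcal{D}(\Omega_k))$, $X_k$ the set of local maximizers $x\in\Omega$ of $|A^*q_k|$ with $|A^*q_k(x)|>1$, $\Omega_{k+1}=\Omega_k\cup X_k$. For $Y,Z\subseteq\mathbb{R}^d$: $\mathrm{dist}(Y,Z)=\sup_{z\in Z}\inf_{y\in Y}\|y-z\|_2$; for a point $x$, $\mathrm{dist}(x,\xi)=\min_i\|x-\xi_i\|_2$. Constants: $\kappa=\sup_{\|q\|_2\le1}\|A^*q\|_\infty$, $\kappa_\nabla=\sup_{\|q\|_2\le1}\sup_{x}\|\nabla(A^*q)(x)\|_2$, $\kappa_{\mathrm{hess}}=\sup_{\|q\|_2\le1}\sup_x\|\nabla^2(A^*q)(x)\|_{\mathrm{op}}$. Source condition: $(\mathcal{P})$ has a unique solution $\mu^\star=\sum_{i=1}^s\alpha_i^\star\delta_{\xi_i}$ (distinct $\xi_i\in\Omega$, $\alpha_i^\star\ne0$), $\xi=\{\xi_1,\dots,\xi_s\}$; $q^\star$ is the solution of $(\mathcal{D})$; $|A^*q^\star(x)|=1$ iff $x\in\xi$; and there are $\tau_0>0,\gamma>0$ with: for all $x\in\Omega$ with $\mathrm{dist}(x,\xi)\le\tau_0$, $|A^*q^\star(x)|\ge\gamma\tau_0^2/2$ and $\nabla^2|A^*q^\star|(x)\preccurlyeq-\gamma\,\mathrm{Id}$; for all $x\in\Omega$ with $\mathrm{dist}(x,\xi)\ge\tau_0$, $|A^*q^\star(x)|\le1-\gamma\tau_0^2/2$.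 *)

theory Defs
  imports "HOL-Analysis.Analysis"
begin

text \<open>Adjoint operator: (A* q)(x) = sum_i q_i a_i(x); the index type 'm plays the role of {1..m}.\<close>
definition Astar :: "('m::finite \<Rightarrow> 'a \<Rightarrow> real) \<Rightarrow> real^'m \<Rightarrow> 'a \<Rightarrow> real" where
  "Astar a q x = (\<Sum>i\<in>UNIV. q $ i * a i x)"

definition grad :: "('a::euclidean_space \<Rightarrow> real) \<Rightarrow> 'a \<Rightarrow> 'a" where
  "grad g x = (THE v. (g has_derivative (\<lambda>h. v \<bullet> h)) (at x))"

definition hess :: "('a::euclidean_space \<Rightarrow> real) \<Rightarrow> 'a \<Rightarrow> 'a \<Rightarrow> 'a" where
  "hess g x = (THE L. (grad g has_derivative L) (at x))"

text \<open>C_0(Omega): continuous on Omega and vanishing at the boundary / at infinity.\<close>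
definition C0_on :: "'a::euclidean_space set \<Rightarrow> ('a \<Rightarrow> real) \<Rightarrow> bool" where
  "C0_on S g \<longleftrightarrow> continuous_on S g \<and>
     (\<forall>e>0. \<exists>K. compact K \<and> K \<subseteq> S \<and> (\<forall>x\<in>S - K. \<bar>g x\<bar> < e))"

definition C2_on :: "'a::euclidean_space set \<Rightarrow> ('a \<Rightarrow> real) \<Rightarrow> bool" where
  "C2_on S g \<longleftrightarrow> (\<forall>x\<in>S. g differentiable (at x) \<and> grad g differentiable (at x)) \<and>
     (\<forall>v. continuous_on S (\<lambda>x. hess g x v))"

definition fconj :: "(real^'m \<Rightarrow> real) \<Rightarrow> real^'m \<Rightarrow> ereal" where
  "fconj f q = (SUP y. ereal (q \<bullet> y - f y))"

definition dual_sol :: "('m::finite \<Rightarrow> 'a \<Rightarrow> real) \<Rightarrow> (real^'m \<Rightarrow> real) \<Rightarrow> 'a set \<Rightarrow> real^'m \<Rightarrow> bool" where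
  "dual_sol a f S q \<longleftrightarrow> (\<forall>x\<in>S. \<bar>Astar a q x\<bar> \<le> 1) \<and>
     (\<forall>p. (\<forall>x\<in>S. \<bar>Astar a p x\<bar> \<le> 1) \<longrightarrow> - fconj f p \<le> - fconj f q)"

text \<open>A finite signed Radon measure on Omega is represented by a pair (P,N) of finite Borel
  measures on the whole space, both concentrated on Omega; it denotes P - N.\<close>
definition signed_on :: "'a::euclidean_space set \<Rightarrow> 'a measure \<times> 'a measure \<Rightarrow> bool" where
  "signed_on S \<mu> \<longleftrightarrow>
     sets (fst \<mu>) = sets borel \<and> sets (snd \<mu>) = sets borel \<and>
     finite_measure (fst \<mu>) \<and> finite_measure (snd \<mu>) \<and>
     emeasure (fst \<mu>) (UNIV - S) = 0 \<and> emeasure (snd \<mu>) (UNIV - S) = 0"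

definition sval :: "'a measure \<times> 'a measure \<Rightarrow> 'a set \<Rightarrow> real" where
  "sval \<mu> A = measure (fst \<mu>) A - measure (snd \<mu>) A"

definition tvnorm :: "'a::euclidean_space measure \<times> 'a measure \<Rightarrow> real" where
  "tvnorm \<mu> = Sup {(\<Sum>A\<in>P. \<bar>sval \<mu> A\<bar>) | P. finite P \<and> P \<subseteq> sets borel \<and> disjoint P}"

definition Aop :: "'a::euclidean_space set \<Rightarrow> ('m::finite \<Rightarrow> 'a \<Rightarrow> real) \<Rightarrow> 'a measure \<times> 'a measure \<Rightarrow> real^'m" where
  "Aop S a \<mu> = (\<chi> i. set_lebesgue_integral (fst \<mu>) S (a i) - set_lebesgue_integral (snd \<mu>) S (a i))"

definition Jfun :: "'a::euclidean_space set \<Rightarrow> ('m::finite \<Rightarrow> 'a \<Rightarrow> real) \<Rightarrow> (real^'m \<Rightarrow> real)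
    \<Rightarrow> 'a measure \<times> 'a measure \<Rightarrow> real" where
  "Jfun S a f \<mu> = tvnorm \<mu> + f (Aop S a \<mu>)"

definition primal_sol :: "'a::euclidean_space set \<Rightarrow> ('m::finite \<Rightarrow> 'a \<Rightarrow> real) \<Rightarrow> (real^'m \<Rightarrow> real)
    \<Rightarrow> 'a measure \<times> 'a measure \<Rightarrow> bool" where
  "primal_sol S a f \<mu> \<longleftrightarrow> signed_on S \<mu> \<and>
     (\<forall>\<nu>. signed_on S \<nu> \<longrightarrow> Jfun S a f \<mu> \<le> Jfun S a f \<nu>)"

definition local_max_on :: "'a::metric_space set \<Rightarrow> ('a \<Rightarrow> real) \<Rightarrow> 'a \<Rightarrow> bool" where
  "local_max_on S g x \<longleftrightarrow> x \<in> S \<and> (\<exists>e>0. \<forall>y\<in>S. dist y x < e \<longrightarrow> g y \<le> g x)"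

definition Xset :: "('m::finite \<Rightarrow> 'a::metric_space \<Rightarrow> real) \<Rightarrow> 'a set \<Rightarrow> real^'m \<Rightarrow> 'a set" where
  "Xset a S q = {x\<in>S. local_max_on S (\<lambda>y. \<bar>Astar a q y\<bar>) x \<and> \<bar>Astar a q x\<bar> > 1}"

text \<open>dist(Y,Z) = sup_{z in Z} inf_{y in Y} ||y - z||, in the extended reals
  (so that sup of the empty set is -infinity and inf of the empty set is +infinity).\<close>
definition hdist :: "'a::metric_space set \<Rightarrow> 'a set \<Rightarrow> ereal" where
  "hdist Y Z = (SUP z\<in>Z. INF y\<in>Y. ereal (dist y z))"

end

theory Submission
  imports Defs
begin

lemma grad_eq:
  fixes g :: "'a::euclidean_space \<Rightarrow> real"
  assumes "(g has_derivative (\<lambda>h. v \<bullet> h)) (at x)"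
  shows "grad g x = v"
  unfolding grad_def
proof (rule the_equality)
  show "(g has_derivative (\<lambda>h. v \<bullet> h)) (at x)" by fact
  fix w assume "(g has_derivative (\<lambda>h. w \<bullet> h)) (at x)"
  then have "(\<lambda>h. w \<bullet> h) = (\<lambda>h. v \<bullet> h)" using has_derivative_unique assms by blast
  then have "w \<bullet> (w - v) = v \<bullet> (w - v)" by metis
  then have "(w - v) \<bullet> (w - v) = 0" by (simp add: inner_diff_left)
  then show "w = v" by simp
qed

lemma grad_rep:
  fixes g :: "'a::euclidean_space \<Rightarrow> real"
  assumes "g differentiable (at x)"
  shows "(g has_derivative (\<lambda>h. grad g x \<bullet> h)) (at x)"
proof -
  obtain D where D: "(g has_derivative D) (at x)" using assms differentiable_def by blast
  have lin: "linear D" using has_derivative_linear[OF D] .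
  define v where "v = (\<Sum>b\<in>Basis. D b *\<^sub>R b)"
  have "D = (\<lambda>h. v \<bullet> h)"
  proof
    fix h
    have "D h = D (\<Sum>b\<in>Basis. (h\<bullet>b) *\<^sub>R b)" by (simp add: euclidean_representation)
    also have "\<dots> = (\<Sum>b\<in>Basis. (h\<bullet>b) * D b)" using lin by (simp add: linear_sum linear_scale)
    also have "\<dots> = v \<bullet> h" by (simp only: v_def inner_sum_left inner_scaleR_left) (simp add: mult.commute inner_commute)
    finally show "D h = v \<bullet> h" .
  qed
  then have Dv: "(g has_derivative (\<lambda>h. v \<bullet> h)) (at x)" using D by simp
  then show ?thesis using grad_eq[OF Dv] by simp
qed

lemma hess_eq:
  assumes "(grad g has_derivative L) (at x)"
  shows "hess g x = L"
  unfolding hess_def using assms has_derivative_unique by blast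

lemma hess_rep:
  assumes "grad g differentiable (at x)"
  shows "(grad g has_derivative hess g x) (at x)"
  using assms hess_eq unfolding differentiable_def by blast

definition Gq :: "('m::finite \<Rightarrow> 'a::euclidean_space \<Rightarrow> real) \<Rightarrow> real^'m \<Rightarrow> 'a \<Rightarrow> 'a" where
  "Gq a q x = (\<Sum>i\<in>UNIV. q$i *\<^sub>R grad (a i) x)"
definition Hq :: "('m::finite \<Rightarrow> 'a::euclidean_space \<Rightarrow> real) \<Rightarrow> real^'m \<Rightarrow> 'a \<Rightarrow> 'a \<Rightarrow> 'a" where
  "Hq a q x = (\<lambda>v. \<Sum>i\<in>UNIV. q$i *\<^sub>R hess (a i) x v)"

context
  fixes \<Omega> :: "'a::euclidean_space set" and a :: "'m::finite \<Rightarrow> 'a \<Rightarrow> real"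
  assumes opn: "open \<Omega>" and C2: "\<And>i. C2_on \<Omega> (a i)"
begin

lemma a_deriv: "x \<in> \<Omega> \<Longrightarrow> (a i has_derivative (\<lambda>h. grad (a i) x \<bullet> h)) (at x)"
  using C2[of i] unfolding C2_on_def by (auto intro: grad_rep)

lemma ga_deriv: "x \<in> \<Omega> \<Longrightarrow> (grad (a i) has_derivative hess (a i) x) (at x)"
  using C2[of i] unfolding C2_on_def by (auto intro: hess_rep)

lemma Astar_deriv: "x \<in> \<Omega> \<Longrightarrow> (Astar a q has_derivative (\<lambda>h. Gq a q x \<bullet> h)) (at x)"
proof -
  assume x: "x \<in> \<Omega>"
  have "((\<lambda>y. \<Sum>i\<in>UNIV. q$i * a i y) has_derivative (\<lambda>h. \<Sum>i\<in>UNIV. q$i * (grad (a i) x \<bullet> h))) (at x)"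
    by (intro has_derivative_sum has_derivative_mult_right a_deriv x)
  moreover have "(\<lambda>h. \<Sum>i\<in>UNIV. q$i * (grad (a i) x \<bullet> h)) = (\<lambda>h. Gq a q x \<bullet> h)"
    by (simp add: Gq_def inner_sum_left)
  ultimately show ?thesis by (simp add: Astar_def[abs_def])
qed

lemma Gq_deriv: "x \<in> \<Omega> \<Longrightarrow> (Gq a q has_derivative Hq a q x) (at x)"
proof -
  assume x: "x \<in> \<Omega>"
  have "((\<lambda>y. \<Sum>i\<in>UNIV. q$i *\<^sub>R grad (a i) y) has_derivative (\<lambda>h. \<Sum>i\<in>UNIV. q$i *\<^sub>R hess (a i) x h)) (at x)"
    by (intro has_derivative_sum has_derivative_scaleR_right ga_deriv x)
  then show ?thesis by (simp add: Gq_def[abs_def] Hq_def)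
qed

lemma grad_Astar: "x \<in> \<Omega> \<Longrightarrow> grad (Astar a q) x = Gq a q x"
  by (rule grad_eq, rule Astar_deriv)

lemma hess_Astar: "x \<in> \<Omega> \<Longrightarrow> hess (Astar a q) x = Hq a q x"
  by (rule hess_eq, rule has_derivative_transform_within_open[OF Gq_deriv opn]) (auto simp: grad_Astar)

lemma Hq_lin: "x \<in> \<Omega> \<Longrightarrow> bounded_linear (Hq a q x)"
  using has_derivative_bounded_linear[OF Gq_deriv] .

lemma hess_abs:
  assumes w: "w \<in> \<Omega>" and pos: "Astar a q w > 0"
  shows "hess (\<lambda>y. \<bar>Astar a q y\<bar>) w = Hq a q w"
proof -
  have cont: "continuous_on \<Omega> (Astar a q)"
    using Astar_deriv has_derivative_continuous continuous_at_imp_continuous_on by blast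
  define U where "U = \<Omega> \<inter> (Astar a q) -` {0<..}"
  have U: "open U" unfolding U_def by (rule continuous_open_preimage[OF cont opn]) auto
  have wU: "w \<in> U" using w pos by (simp add: U_def)
  have gU: "grad (\<lambda>y. \<bar>Astar a q y\<bar>) y = Gq a q y" if y: "y \<in> U" for y
  proof (rule grad_eq)
    show "((\<lambda>y. \<bar>Astar a q y\<bar>) has_derivative (\<lambda>h. Gq a q y \<bullet> h)) (at y)"
      by (rule has_derivative_transform_within_open[OF Astar_deriv U y]) (use y in \<open>auto simp: U_def\<close>)
  qed
  show ?thesis
    by (rule hess_eq, rule has_derivative_transform_within_open[OF Gq_deriv U wU]) (use w gU in auto)
qed

end

lemma Astar_scale: "Astar a (c *\<^sub>R q) x = c * Astar a q x"
  by (simp add: Astar_def sum_distrib_left mult.assoc)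
lemma Astar_add: "Astar a (q + p) x = Astar a q x + Astar a p x"
  by (simp add: Astar_def sum.distrib distrib_right)
lemma Astar_diff: "Astar a (q - p) x = Astar a q x - Astar a p x"
  by (simp add: Astar_def sum_subtractf left_diff_distrib)
lemma Gq_scale: "Gq a (c *\<^sub>R q) x = c *\<^sub>R Gq a q x"
  by (simp add: Gq_def scaleR_sum_right)
lemma Gq_add: "Gq a (q + p) x = Gq a q x + Gq a p x"
  by (simp add: Gq_def sum.distrib scaleR_add_left)
lemma Gq_diff: "Gq a (q - p) x = Gq a q x - Gq a p x"
  by (simp add: Gq_def sum_subtractf scaleR_diff_left)
lemma Hq_scale: "Hq a (c *\<^sub>R q) x v = c *\<^sub>R Hq a q x v"
  by (simp add: Hq_def scaleR_sum_right)
lemma Hq_add: "Hq a (q + p) x v = Hq a q x v + Hq a p x v"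
  by (simp add: Hq_def sum.distrib scaleR_add_left)

context
  fixes \<Omega> :: "'a::euclidean_space set" and a :: "'m::finite \<Rightarrow> 'a \<Rightarrow> real"
  assumes opn: "open \<Omega>" and C2: "\<And>i. C2_on \<Omega> (a i)"
   and C0: "\<And>i. C0_on \<Omega> (a i)"
   and bdd1: "\<And>i. bounded (grad (a i) ` \<Omega>)"
   and bdd2: "\<And>i. bounded ((\<lambda>x. onorm (hess (a i) x)) ` \<Omega>)"
begin

lemma a_bounded: "\<exists>B. \<forall>x\<in>\<Omega>. \<bar>a i x\<bar> \<le> B"
proof -
  obtain K where K: "compact K" "K \<subseteq> \<Omega>" "\<And>x. x \<in> \<Omega> - K \<Longrightarrow> \<bar>a i x\<bar> < 1"
    using C0[of i] unfolding C0_on_def by (meson zero_less_one)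
  have "continuous_on K (a i)" using C0[of i] K(2) unfolding C0_on_def
    using continuous_on_subset by blast
  then have "compact (a i ` K)" using K(1) compact_continuous_image by blast
  then obtain B where B: "\<forall>y\<in>a i ` K. norm y \<le> B" using compact_imp_bounded bounded_iff by metis
  show ?thesis
  proof (intro exI ballI)
    fix x assume "x \<in> \<Omega>"
    then show "\<bar>a i x\<bar> \<le> max B 1" using B K(3)[of x]
      by (cases "x \<in> K") force+
  qed
qed

lemma kappa_bound:
  assumes x: "x \<in> \<Omega>"
  shows "\<bar>Astar a q x\<bar> \<le> Sup {\<bar>Astar a q x\<bar> | q x. norm q \<le> 1 \<and> x \<in> \<Omega>} * norm q"
proof -
  obtain Ba where Ba: "\<And>i x. x \<in> \<Omega> \<Longrightarrow> \<bar>a i x\<bar> \<le> Ba i"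
    using a_bounded by metis
  define S where "S = {\<bar>Astar a q x\<bar> | q x. norm q \<le> 1 \<and> x \<in> \<Omega>}"
  have bdd: "bdd_above S"
  proof (rule bdd_aboveI)
    fix y assume "y \<in> S"
    then obtain q x where y: "y = \<bar>Astar a q x\<bar>" "norm q \<le> 1" "x \<in> \<Omega>" unfolding S_def by blast
    have "y \<le> (\<Sum>i\<in>UNIV. \<bar>q$i * a i x\<bar>)" unfolding y Astar_def by (rule sum_abs)
    also have "\<dots> \<le> (\<Sum>i\<in>UNIV. 1 * Ba i)"
    proof (rule sum_mono)
      fix i
      have "\<bar>q$i\<bar> \<le> 1" using component_le_norm_cart[of q i] y(2) by linarith
      then show "\<bar>q$i * a i x\<bar> \<le> 1 * Ba i" unfolding abs_mult
        by (rule mult_mono) (use Ba y(3) in auto)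
    qed
    finally show "y \<le> (\<Sum>i\<in>UNIV. 1 * Ba i)" .
  qed
  show ?thesis
  proof (cases "q = 0")
    case True then show ?thesis by (simp add: Astar_def)
  next
    case False
    define q' where "q' = (1 / norm q) *\<^sub>R q"
    have "norm q' = 1" using False by (simp add: q'_def)
    then have "\<bar>Astar a q' x\<bar> \<in> S" using x unfolding S_def by force
    then have "\<bar>Astar a q' x\<bar> \<le> Sup S" by (intro cSup_upper bdd)
    moreover have "q = norm q *\<^sub>R q'" using False by (simp add: q'_def)
    then have "Astar a q x = norm q * Astar a q' x" by (metis Astar_scale)
    ultimately show ?thesis unfolding S_def by (simp add: abs_mult mult.commute mult_left_mono)
  qed
qed

lemma kgrad_bound:
  assumes x: "x \<in> \<Omega>"
  shows "norm (Gq a q x) \<le> Sup {norm (grad (Astar a q) x) | q x. norm q \<le> 1 \<and> x \<in> \<Omega>} * norm q"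
proof -
  obtain Bg where Bg: "\<And>i x. x \<in> \<Omega> \<Longrightarrow> norm (grad (a i) x) \<le> Bg i"
    using bdd1 unfolding bounded_iff by (metis imageI)
  define S where "S = {norm (grad (Astar a q) x) | q x. norm q \<le> 1 \<and> x \<in> \<Omega>}"
  have bdd: "bdd_above S"
  proof (rule bdd_aboveI)
    fix y assume "y \<in> S"
    then obtain q x where y: "y = norm (Gq a q x)" "norm q \<le> 1" "x \<in> \<Omega>" unfolding S_def
      using grad_Astar[of \<Omega> a, OF opn C2] by force
    have "y \<le> (\<Sum>i\<in>UNIV. norm (q$i *\<^sub>R grad (a i) x))" unfolding y Gq_def by (rule norm_sum)
    also have "\<dots> \<le> (\<Sum>i\<in>UNIV. 1 * Bg i)"
    proof (rule sum_mono)
      fix i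
      have "\<bar>q$i\<bar> \<le> 1" using component_le_norm_cart[of q i] y(2) by linarith
      then show "norm (q$i *\<^sub>R grad (a i) x) \<le> 1 * Bg i" unfolding norm_scaleR
        by (rule mult_mono) (use Bg y(3) in auto)
    qed
    finally show "y \<le> (\<Sum>i\<in>UNIV. 1 * Bg i)" .
  qed
  show ?thesis
  proof (cases "q = 0")
    case True then show ?thesis by (simp add: Gq_def)
  next
    case False
    define q' where "q' = (1 / norm q) *\<^sub>R q"
    have "norm q' = 1" using False by (simp add: q'_def)
    then have "norm (grad (Astar a q') x) \<in> S" using x unfolding S_def by force
    then have "norm (Gq a q' x) \<in> S" using grad_Astar[of \<Omega> a, OF opn C2 x] by simp
    then have "norm (Gq a q' x) \<le> Sup S" by (intro cSup_upper bdd)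
    moreover have "q = norm q *\<^sub>R q'" using False by (simp add: q'_def)
    then have "Gq a q x = norm q *\<^sub>R Gq a q' x" by (metis Gq_scale)
    ultimately show ?thesis unfolding S_def by (simp add: mult.commute mult_left_mono)
  qed
qed

lemma khess_bound:
  fixes v :: 'a
  assumes x: "x \<in> \<Omega>"
  shows "norm (Hq a q x v) \<le> Sup {onorm (hess (Astar a q) x) | q x. norm q \<le> 1 \<and> x \<in> \<Omega>} * norm q * norm v"
proof -
  obtain Bh where Bh: "\<And>i x. x \<in> \<Omega> \<Longrightarrow> norm (onorm (hess (a i) x)) \<le> Bh i"
    using bdd2 unfolding bounded_iff by (metis imageI)
  have blh: "\<And>i x. x \<in> \<Omega> \<Longrightarrow> bounded_linear (hess (a i) x)"
    using ga_deriv[of \<Omega> a, OF opn C2] has_derivative_bounded_linear by blast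
  define S where "S = {onorm (hess (Astar a q) x) | q x. norm q \<le> 1 \<and> x \<in> \<Omega>}"
  have bdd: "bdd_above S"
  proof (rule bdd_aboveI)
    fix y assume "y \<in> S"
    then obtain q x where y: "y = onorm (Hq a q x)" "norm q \<le> 1" "x \<in> \<Omega>" unfolding S_def
      using hess_Astar[of \<Omega> a, OF opn C2] by force
    have "onorm (Hq a q x) \<le> (\<Sum>i\<in>UNIV. 1 * Bh i)"
    proof (rule onorm_le)
      fix v
      have "norm (Hq a q x v) \<le> (\<Sum>i\<in>UNIV. norm (q$i *\<^sub>R hess (a i) x v))" unfolding Hq_def by (rule norm_sum)
      also have "\<dots> \<le> (\<Sum>i\<in>UNIV. 1 * Bh i * norm v)"
      proof (rule sum_mono)
        fix i
        have "\<bar>q$i\<bar> \<le> 1" using component_le_norm_cart[of q i] y(2) by linarith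
        moreover have "norm (hess (a i) x v) \<le> Bh i * norm v"
        proof -
          have "onorm (hess (a i) x) \<le> Bh i" using Bh[OF y(3), of i] by simp
          then have "onorm (hess (a i) x) * norm v \<le> Bh i * norm v" by (rule mult_right_mono) simp
          then show ?thesis using onorm[OF blh[OF y(3), of i], of v] by linarith
        qed
        ultimately show "norm (q$i *\<^sub>R hess (a i) x v) \<le> 1 * Bh i * norm v" unfolding norm_scaleR
          using mult_mono[of "\<bar>q$i\<bar>" 1 "norm (hess (a i) x v)" "Bh i * norm v"] by simp
      qed
      finally show "norm (Hq a q x v) \<le> (\<Sum>i\<in>UNIV. 1 * Bh i) * norm v" by (simp add: sum_distrib_right)
    qed
    then show "y \<le> (\<Sum>i\<in>UNIV. 1 * Bh i)" using y by simp
  qed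
  show ?thesis
  proof (cases "q = 0")
    case True then show ?thesis by (simp add: Hq_def)
  next
    case False
    define q' where "q' = (1 / norm q) *\<^sub>R q"
    have "norm q' = 1" using False by (simp add: q'_def)
    then have "onorm (hess (Astar a q') x) \<in> S" using x unfolding S_def by force
    then have "onorm (Hq a q' x) \<in> S" using hess_Astar[of \<Omega> a, OF opn C2 x] by simp
    then have "onorm (Hq a q' x) \<le> Sup S" by (intro cSup_upper bdd)
    then have "norm (Hq a q' x v) \<le> Sup S * norm v"
      using onorm[OF Hq_lin[where \<Omega>=\<Omega> and a=a and q=q', OF opn C2 x], of v] by (meson mult_right_mono norm_ge_zero order_trans)
    moreover have "q = norm q *\<^sub>R q'" using False by (simp add: q'_def)
    then have "Hq a q x v = norm q *\<^sub>R Hq a q' x v" by (metis Hq_scale)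
    ultimately have "norm (Hq a q x v) \<le> norm q * (Sup S * norm v)"
      by (simp add: mult_left_mono)
    then show ?thesis unfolding S_def by (simp add: algebra_simps)
  qed
qed

end

lemma seg_in:
  assumes "convex C" "x \<in> C" "y \<in> C" "0 \<le> t" "t \<le> 1"
  shows "x + t *\<^sub>R (y - x) \<in> C"
proof -
  have "x + t *\<^sub>R (y - x) = (1 - t) *\<^sub>R x + t *\<^sub>R y" by (simp add: algebra_simps)
  then show ?thesis using convexD[OF assms(1-3), of "1-t" t] assms(4,5) by simp
qed

context
  fixes \<Omega> :: "'a::euclidean_space set" and a :: "'m::finite \<Rightarrow> 'a \<Rightarrow> real"
  assumes opn: "open \<Omega>" and C2: "\<And>i. C2_on \<Omega> (a i)"
begin

lemma seg_Astar_cont: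
  assumes "x + t *\<^sub>R u \<in> \<Omega>"
  shows "isCont (\<lambda>t. Astar a q (x + t *\<^sub>R u)) t"
proof -
  have "((\<lambda>t. x + t *\<^sub>R u) has_derivative (\<lambda>h. h *\<^sub>R u)) (at t)"
    by (auto intro!: derivative_eq_intros)
  from has_derivative_compose[OF this Astar_deriv[of \<Omega> a, OF opn C2 assms]]
  show ?thesis using has_derivative_continuous by blast
qed

lemma seg_mvt:
  assumes C: "convex C" "C \<subseteq> \<Omega>" and x: "x \<in> C" and y: "y \<in> C"
  shows "\<exists>p\<in>C. (Gq a q y - Gq a q x) \<bullet> (y - x) = (y - x) \<bullet> Hq a q p (y - x)"
proof -
  define u where "u = y - x"
  define g where "g t = Gq a q (x + t *\<^sub>R u) \<bullet> u" for t
  define g' where "g' t = Hq a q (x + t *\<^sub>R u) u \<bullet> u" for t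
  have "DERIV g t :> g' t" if t: "0 \<le> t" "t \<le> 1" for t
  proof -
    have p: "x + t *\<^sub>R u \<in> \<Omega>" using seg_in[OF C(1) x y t] C(2) u_def by auto
    have "((\<lambda>t. x + t *\<^sub>R u) has_derivative (\<lambda>h. h *\<^sub>R u)) (at t)"
      by (auto intro!: derivative_eq_intros)
    from has_derivative_compose[OF this Gq_deriv[of \<Omega> a, OF opn C2 p]]
    have "((\<lambda>t. Gq a q (x + t *\<^sub>R u)) has_derivative (\<lambda>h. Hq a q (x + t *\<^sub>R u) (h *\<^sub>R u))) (at t)" .
    from has_derivative_inner_left[OF this, of u]
    have d: "(g has_derivative (\<lambda>h. Hq a q (x + t *\<^sub>R u) (h *\<^sub>R u) \<bullet> u)) (at t)"
      unfolding g_def .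
    have lin: "linear (Hq a q (x + t *\<^sub>R u))" using Hq_lin[of \<Omega> a, OF opn C2 p] bounded_linear.linear by blast
    have "(\<lambda>h. Hq a q (x + t *\<^sub>R u) (h *\<^sub>R u) \<bullet> u) = (*) (g' t)"
      by (rule ext) (simp add: linear_scale[OF lin] g'_def mult.commute)
    with d show ?thesis unfolding has_field_derivative_def by simp
  qed
  from MVT2[of 0 1 g g', OF zero_less_one this]
  obtain t where t: "0 < t" "t < 1" "g 1 - g 0 = (1 - 0) * g' t" by auto
  have "x + t *\<^sub>R (y - x) \<in> C" using seg_in[OF C(1) x y] t by auto
  moreover have "(Gq a q y - Gq a q x) \<bullet> (y - x) = (y - x) \<bullet> Hq a q (x + t *\<^sub>R (y - x)) (y - x)"
    using t(3) by (simp add: g_def g'_def u_def inner_diff_left inner_diff_right inner_commute)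
  ultimately show ?thesis by blast
qed

end
theorem mainTheorem7:
  fixes \<Omega> :: "'a::euclidean_space set"
    and a :: "'m::finite \<Rightarrow> 'a \<Rightarrow> real"
    and f :: "real^'m \<Rightarrow> real"
    and L :: real and gradf :: "real^'m \<Rightarrow> real^'m"
    and s :: nat and xi :: "nat \<Rightarrow> 'a" and alpha :: "nat \<Rightarrow> real"
    and \<mu>star :: "'a measure \<times> 'a measure"
    and qstar :: "real^'m"
    and tau0 gamma :: real
    and Om :: "nat \<Rightarrow> 'a set" and qs :: "nat \<Rightarrow> real^'m"
    and k :: nat
  defines "kappa \<equiv> Sup {\<bar>Astar a q x\<bar> | q x. norm q \<le> 1 \<and> x \<in> \<Omega>}"
    and "kgrad \<equiv> Sup {norm (grad (Astar a q) x) | q x. norm q \<le> 1 \<and> x \<in> \<Omega>}"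
    and "khess \<equiv> Sup {onorm (hess (Astar a q) x) | q x. norm q \<le> 1 \<and> x \<in> \<Omega>}"
    and "pdist \<equiv> (\<lambda>x. INF i\<in>{1..s}. ereal (norm (x - xi i)))"
  assumes \<Omega>: "open \<Omega>" "convex \<Omega>" "\<Omega> \<noteq> {}"
    and a_C0: "\<And>i. C0_on \<Omega> (a i)"
    and a_C2: "\<And>i. C2_on \<Omega> (a i)"
    and a_bdd: "\<And>i. bounded (grad (a i) ` \<Omega>)"
      "\<And>i. bounded ((\<lambda>x. onorm (hess (a i) x)) ` \<Omega>)"
    and f_convex: "convex_on UNIV f"
    and f_bdd: "bdd_below (range f)"
    and f_grad: "\<And>y. (f has_derivative (\<lambda>h. gradf y \<bullet> h)) (at y)"
    and f_lip: "L-lipschitz_on UNIV gradf"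
    (* source condition *)
    and xi_inj: "inj_on xi {1..s}" and xi_in: "xi ` {1..s} \<subseteq> \<Omega>"
    and alpha_nz: "\<And>i. i \<in> {1..s} \<Longrightarrow> alpha i \<noteq> 0"
    and \<mu>star_meas: "signed_on \<Omega> \<mu>star"
    and \<mu>star_dirac: "\<And>A. A \<in> sets borel \<Longrightarrow>
                       sval \<mu>star A = (\<Sum>i\<in>{i\<in>{1..s}. xi i \<in> A}. alpha i)"
    and P_unique: "\<And>\<nu>. primal_sol \<Omega> a f \<nu> \<longleftrightarrow>
                     signed_on \<Omega> \<nu> \<and> (\<forall>A\<in>sets borel. sval \<nu> A = sval \<mu>star A)"
    and qstar_sol: "dual_sol a f \<Omega> qstar"
    and no_gap: "ereal (Jfun \<Omega> a f \<mu>star) = - fconj f qstar"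
    and qstar_one: "\<And>x. x \<in> \<Omega> \<Longrightarrow> \<bar>Astar a qstar x\<bar> = 1 \<longleftrightarrow> x \<in> xi ` {1..s}"
    and tau0: "tau0 > 0" and gamma: "gamma > 0"
    and near: "\<And>x. x \<in> \<Omega> \<Longrightarrow> pdist x \<le> ereal tau0 \<Longrightarrow>
                 \<bar>Astar a qstar x\<bar> \<ge> gamma * tau0\<^sup>2 / 2 \<and>
                 (\<forall>v. v \<bullet> hess (\<lambda>y. \<bar>Astar a qstar y\<bar>) x v \<le> - gamma * (norm v)\<^sup>2)"
    and far: "\<And>x. x \<in> \<Omega> \<Longrightarrow> pdist x \<ge> ereal tau0 \<Longrightarrow>
                 \<bar>Astar a qstar x\<bar> \<le> 1 - gamma * tau0\<^sup>2 / 2"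
    (* exchange algorithm *)
    and Om0: "Om 0 \<subseteq> \<Omega>"
    and qs_sol: "\<And>j. dual_sol a f (Om j) (qs j)"
    and Om_step: "\<And>j. Om (Suc j) = Om j \<union> Xset a \<Omega> (qs j)"
    (* closeness *)
    and close: "norm (qs k - qstar) < gamma * min (tau0\<^sup>2 / (2 * kappa)) (min (tau0 / kgrad) (1 / khess))"
  shows "hdist (xi ` {1..s}) (Xset a \<Omega> (qs k)) \<le> ereal (kgrad / gamma * norm (qs k - qstar))
         \<and> (\<forall>i\<in>{1..s}.
              (\<forall>x\<in>Xset a \<Omega> (qs k). \<forall>y\<in>Xset a \<Omega> (qs k).
                  norm (x - xi i) \<le> tau0 \<longrightarrow> norm (y - xi i) \<le> tau0 \<longrightarrow> x = y)
            \<and> (\<forall>x\<in>\<Omega>. norm (x - xi i) \<le> tau0 \<longrightarrow>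
                  Astar a (qs k) x \<noteq> 0 \<and> sgn (Astar a (qs k) x) = sgn (Astar a qstar (xi i))))"
proof -
  define D where "D = qs k - qstar"
  define n where "n = norm D"
  define c where "c = gamma * tau0\<^sup>2 / 2"
  have n0: "0 \<le> n" by (simp add: n_def)
  have c0: "c > 0" using gamma tau0 by (simp add: c_def)
  define m where "m = min (tau0\<^sup>2 / (2 * kappa)) (min (tau0 / kgrad) (1 / khess))"
  have close': "n < gamma * m" using close by (simp add: n_def D_def m_def)
  have "gamma * m > 0" using close' n0 by linarith
  then have m0: "m > 0" using gamma by (simp add: zero_less_mult_iff)
  have m1: "0 < tau0\<^sup>2 / (2 * kappa)" "0 < tau0 / kgrad" "0 < 1 / khess"
    using m0 unfolding m_def by auto
  have kp: "kappa > 0" using m1(1) tau0 by (simp add: zero_less_divide_iff)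
  have kgp: "kgrad > 0" using m1(2) tau0 by (simp add: zero_less_divide_iff)
  have khp: "khess > 0" using m1(3) by (simp add: zero_less_divide_iff)
  have "gamma * m \<le> gamma * (tau0\<^sup>2 / (2 * kappa))" using gamma unfolding m_def
    by (intro mult_left_mono) auto
  then have "n < gamma * (tau0\<^sup>2 / (2 * kappa))" using close' by linarith
  then have "kappa * n < kappa * (gamma * (tau0\<^sup>2 / (2 * kappa)))" using kp by (rule mult_strict_left_mono)
  moreover have "kappa * (gamma * (tau0\<^sup>2 / (2 * kappa))) = c" using kp by (simp add: c_def)
  ultimately have nk: "kappa * n < c" by simp
  have "gamma * m \<le> gamma * (1 / khess)" using gamma unfolding m_def
    by (intro mult_left_mono) auto
  then have "n < gamma * (1 / khess)" using close' by linarith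
  then have "khess * n < khess * (gamma * (1 / khess))" using khp by (rule mult_strict_left_mono)
  then have nh: "khess * n < gamma" using khp by simp
  have AD: "\<And>x q. x \<in> \<Omega> \<Longrightarrow> \<bar>Astar a q x\<bar> \<le> kappa * norm q"
    using kappa_bound[of \<Omega> a, OF \<Omega>(1) a_C2 a_C0 a_bdd(1) a_bdd(2)] unfolding kappa_def by blast
  have GD: "\<And>x q. x \<in> \<Omega> \<Longrightarrow> norm (Gq a q x) \<le> kgrad * norm q"
    using kgrad_bound[of \<Omega> a, OF \<Omega>(1) a_C2 a_C0 a_bdd(1) a_bdd(2)] unfolding kgrad_def by blast
  have HD: "\<And>x q v. x \<in> \<Omega> \<Longrightarrow> norm (Hq a q x v) \<le> khess * norm q * norm v"
    using khess_bound[of \<Omega> a, OF \<Omega>(1) a_C2 a_C0 a_bdd(1) a_bdd(2)] unfolding khess_def by blast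
  have ADn: "\<And>x. x \<in> \<Omega> \<Longrightarrow> \<bar>Astar a D x\<bar> < c" using AD[of _ D] nk n_def by fastforce
  have qk: "qs k = qstar + D" by (simp add: D_def)
  have Ak: "\<And>x. Astar a (qs k) x = Astar a qstar x + Astar a D x" by (simp add: qk Astar_add)
  have qs_le1: "\<And>x. x \<in> \<Omega> \<Longrightarrow> \<bar>Astar a qstar x\<bar> \<le> 1"
    using qstar_sol unfolding dual_sol_def by blast
  have X_near: "\<exists>i\<in>{1..s}. norm (z - xi i) < tau0" if z: "z \<in> Xset a \<Omega> (qs k)" for z
  proof (rule ccontr)
    assume nz: "\<not> (\<exists>i\<in>{1..s}. norm (z - xi i) < tau0)"
    have zO: "z \<in> \<Omega>" and z1: "\<bar>Astar a (qs k) z\<bar> > 1" using z unfolding Xset_def by auto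
    have "\<not> pdist z < ereal tau0" unfolding pdist_def INF_less_iff using nz by simp
    then have "pdist z \<ge> ereal tau0" by simp
    from far[OF zO this] have "\<bar>Astar a qstar z\<bar> \<le> 1 - c" by (simp add: c_def)
    moreover have "\<bar>Astar a D z\<bar> < c" using ADn zO .
    ultimately have "\<bar>Astar a (qs k) z\<bar> < 1" unfolding Ak by linarith
    with z1 show False by simp
  qed
  have per_i: "(\<forall>x\<in>\<Omega>. norm (x - xi i) \<le> tau0 \<longrightarrow>
                  Astar a (qs k) x \<noteq> 0 \<and> sgn (Astar a (qs k) x) = sgn (Astar a qstar (xi i)))
     \<and> (\<forall>x\<in>Xset a \<Omega> (qs k). \<forall>y\<in>Xset a \<Omega> (qs k).
                  norm (x - xi i) \<le> tau0 \<longrightarrow> norm (y - xi i) \<le> tau0 \<longrightarrow> x = y)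
     \<and> (\<forall>z\<in>Xset a \<Omega> (qs k). norm (z - xi i) \<le> tau0 \<longrightarrow> norm (z - xi i) \<le> kgrad / gamma * n)"
    if i: "i \<in> {1..s}" for i
  proof -
    define \<xi> where "\<xi> = xi i"
    have \<xi>O: "\<xi> \<in> \<Omega>" using xi_in i by (auto simp: \<xi>_def)
    have one: "\<bar>Astar a qstar \<xi>\<bar> = 1" using qstar_one[OF \<xi>O] i by (auto simp: \<xi>_def)
    define \<sigma> where "\<sigma> = sgn (Astar a qstar \<xi>)"
    have \<sigma>: "\<sigma> = 1 \<or> \<sigma> = -1" and \<sigma>A: "\<sigma> * Astar a qstar \<xi> = 1"
      using one by (auto simp: \<sigma>_def abs_if sgn_if split: if_splits)
    have abs\<sigma>: "\<bar>\<sigma>\<bar> = 1" using \<sigma> by auto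
    define B where "B = \<Omega> \<inter> cball \<xi> tau0"
    have Bc: "convex B" unfolding B_def using \<Omega>(2) by (simp add: convex_Int)
    have BO: "B \<subseteq> \<Omega>" by (simp add: B_def)
    have inB: "\<And>x. x \<in> B \<longleftrightarrow> x \<in> \<Omega> \<and> norm (x - \<xi>) \<le> tau0"
      by (auto simp: B_def dist_norm norm_minus_commute)
    have \<xi>B: "\<xi> \<in> B" using \<xi>O tau0 inB by simp
    have nearB: "\<bar>Astar a qstar x\<bar> \<ge> c \<and> (\<forall>v. v \<bullet> hess (\<lambda>y. \<bar>Astar a qstar y\<bar>) x v \<le> - gamma * (norm v)\<^sup>2)"
      if x: "x \<in> B" for x
    proof -
      have "pdist x \<le> ereal (norm (x - xi i))" unfolding pdist_def by (rule INF_lower) (use i in auto)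
      also have "\<dots> \<le> ereal tau0" using x inB \<xi>_def by simp
      finally show ?thesis using near[of x] x inB by (simp add: c_def)
    qed
    have pos: "\<sigma> * Astar a qstar x > 0" if x: "x \<in> B" for x
    proof (rule ccontr)
      assume nx: "\<not> \<sigma> * Astar a qstar x > 0"
      define g where "g t = Astar a qstar (\<xi> + t *\<^sub>R (x - \<xi>))" for t
      have cont: "\<forall>t. 0 \<le> t \<and> t \<le> 1 \<longrightarrow> isCont g t"
      proof (intro allI impI)
        fix t :: real assume "0 \<le> t \<and> t \<le> 1"
        then have "\<xi> + t *\<^sub>R (x - \<xi>) \<in> \<Omega>" using seg_in[OF Bc \<xi>B x] BO by auto
        then show "isCont g t" unfolding g_def by (rule seg_Astar_cont[OF \<Omega>(1) a_C2])
      qed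
      have g0: "g 0 = Astar a qstar \<xi>" and g1: "g 1 = Astar a qstar x" by (simp_all add: g_def)
      have "\<exists>t\<ge>0. t \<le> 1 \<and> g t = 0"
      proof (cases "\<sigma> = 1")
        case True
        then show ?thesis using IVT2[of g 1 0 0] cont g0 g1 nx \<sigma>A by auto
      next
        case False
        then have "\<sigma> = -1" using \<sigma> by simp
        then show ?thesis using IVT[of g 0 0 1] cont g0 g1 nx \<sigma>A by auto
      qed
      then obtain t where t: "0 \<le> t" "t \<le> 1" "g t = 0" by blast
      have "\<xi> + t *\<^sub>R (x - \<xi>) \<in> B" using seg_in[OF Bc \<xi>B x t(1,2)] .
      from nearB[OF this] have "\<bar>g t\<bar> \<ge> c" by (simp add: g_def)
      with t(3) c0 show False by simp
    qed
    have absB: "\<bar>Astar a qstar x\<bar> = \<sigma> * Astar a qstar x" if x: "x \<in> B" for x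
      using pos[OF x] \<sigma> by auto
    have kpos: "\<sigma> * Astar a (qs k) x > 0" if x: "x \<in> B" for x
    proof -
      have "\<sigma> * Astar a qstar x \<ge> c" using nearB[OF x] absB[OF x] by simp
      moreover have "\<bar>\<sigma> * Astar a D x\<bar> < c" using ADn[of x] x inB abs\<sigma> by (simp add: abs_mult)
      ultimately show ?thesis unfolding Ak by (simp add: distrib_left)
    qed
    have absk: "\<bar>Astar a (qs k) x\<bar> = \<sigma> * Astar a (qs k) x" if x: "x \<in> B" for x
      using kpos[OF x] \<sigma> by auto
    have partA: "\<forall>x\<in>\<Omega>. norm (x - xi i) \<le> tau0 \<longrightarrow>
                  Astar a (qs k) x \<noteq> 0 \<and> sgn (Astar a (qs k) x) = sgn (Astar a qstar (xi i))"
    proof (intro ballI impI)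
      fix x assume "x \<in> \<Omega>" "norm (x - xi i) \<le> tau0"
      then have x: "x \<in> B" using inB \<xi>_def by simp
      show "Astar a (qs k) x \<noteq> 0 \<and> sgn (Astar a (qs k) x) = sgn (Astar a qstar (xi i))"
        using kpos[OF x] \<sigma> unfolding \<sigma>_def[symmetric] \<xi>_def[symmetric]
        by (auto simp: sgn_if zero_less_mult_iff)
    qed
    have Hstar: "v \<bullet> Hq a (\<sigma> *\<^sub>R qstar) p v \<le> - gamma * (norm v)\<^sup>2" if p: "p \<in> B" for p v
    proof -
      have pO: "p \<in> \<Omega>" using p BO by auto
      have "Astar a (\<sigma> *\<^sub>R qstar) p > 0" using pos[OF p] by (simp add: Astar_scale)
      from hess_abs[of \<Omega> a, OF \<Omega>(1) a_C2 pO this]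
      have "hess (\<lambda>y. \<bar>Astar a (\<sigma> *\<^sub>R qstar) y\<bar>) p = Hq a (\<sigma> *\<^sub>R qstar) p" .
      moreover have "(\<lambda>y. \<bar>Astar a (\<sigma> *\<^sub>R qstar) y\<bar>) = (\<lambda>y. \<bar>Astar a qstar y\<bar>)"
        by (rule ext) (simp add: Astar_scale abs_mult abs\<sigma>)
      ultimately show ?thesis using nearB[OF p] by metis
    qed
    have HDb: "\<bar>v \<bullet> Hq a (\<sigma> *\<^sub>R D) p v\<bar> \<le> khess * n * (norm v)\<^sup>2" if p: "p \<in> \<Omega>" for p v
    proof -
      have "\<bar>v \<bullet> Hq a (\<sigma> *\<^sub>R D) p v\<bar> \<le> norm v * norm (Hq a (\<sigma> *\<^sub>R D) p v)"
        by (rule Cauchy_Schwarz_ineq2)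
      also have "\<dots> \<le> norm v * (khess * norm (\<sigma> *\<^sub>R D) * norm v)"
        by (rule mult_left_mono[OF HD[OF p]]) simp
      also have "\<dots> = khess * n * (norm v)\<^sup>2" using abs\<sigma> by (simp add: n_def power2_eq_square)
      finally show ?thesis .
    qed
    have \<sigma>qk: "\<sigma> *\<^sub>R qs k = \<sigma> *\<^sub>R qstar + \<sigma> *\<^sub>R D" by (simp add: qk scaleR_add_right)
    have Hk: "v \<bullet> Hq a (\<sigma> *\<^sub>R qs k) p v \<le> - (gamma - khess * n) * (norm v)\<^sup>2" if p: "p \<in> B" for p v
    proof -
      have "v \<bullet> Hq a (\<sigma> *\<^sub>R qs k) p v = v \<bullet> Hq a (\<sigma> *\<^sub>R qstar) p v + v \<bullet> Hq a (\<sigma> *\<^sub>R D) p v"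
        by (simp add: \<sigma>qk Hq_add inner_add_right)
      then show ?thesis using Hstar[OF p, of v] HDb[of p v] p BO
        by (auto simp: algebra_simps)
    qed
    have G0k: "Gq a (\<sigma> *\<^sub>R qs k) z = 0" if z: "z \<in> Xset a \<Omega> (qs k)" "z \<in> B" for z
    proof -
      have zO: "z \<in> \<Omega>" using z BO by auto
      obtain e where e: "e > 0" "\<And>y. y \<in> \<Omega> \<Longrightarrow> dist y z < e \<Longrightarrow> \<bar>Astar a (qs k) y\<bar> \<le> \<bar>Astar a (qs k) z\<bar>"
        using z(1) unfolding Xset_def local_max_on_def by blast
      define S where "S = ball z e \<inter> \<Omega>"
      have S: "open S" "z \<in> S" using \<Omega>(1) e zO by (auto simp: S_def)
      have "\<forall>y\<in>S. Astar a (\<sigma> *\<^sub>R qs k) y \<le> Astar a (\<sigma> *\<^sub>R qs k) z"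
      proof
        fix y assume y: "y \<in> S"
        have "\<sigma> * Astar a (qs k) y \<le> \<bar>\<sigma> * Astar a (qs k) y\<bar>" by simp
        also have "\<dots> = \<bar>Astar a (qs k) y\<bar>" by (simp add: abs_mult abs\<sigma>)
        also have "\<dots> \<le> \<bar>Astar a (qs k) z\<bar>" using e(2)[of y] y by (auto simp: S_def dist_commute)
        also have "\<dots> = \<sigma> * Astar a (qs k) z" using absk z(2) by simp
        finally show "Astar a (\<sigma> *\<^sub>R qs k) y \<le> Astar a (\<sigma> *\<^sub>R qs k) z" by (simp add: Astar_scale)
      qed
      from differential_zero_maxmin[OF S(2) S(1) Astar_deriv[of \<Omega> a, OF \<Omega>(1) a_C2 zO]] this
      have "(\<lambda>h. Gq a (\<sigma> *\<^sub>R qs k) z \<bullet> h) = (\<lambda>v. 0)" by blast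
      then have "Gq a (\<sigma> *\<^sub>R qs k) z \<bullet> Gq a (\<sigma> *\<^sub>R qs k) z = 0" by metis
      then show ?thesis by simp
    qed
    have G0s: "Gq a (\<sigma> *\<^sub>R qstar) \<xi> = 0"
    proof -
      have "\<forall>y\<in>\<Omega>. Astar a (\<sigma> *\<^sub>R qstar) y \<le> Astar a (\<sigma> *\<^sub>R qstar) \<xi>"
      proof
        fix y assume y: "y \<in> \<Omega>"
        have "\<sigma> * Astar a qstar y \<le> \<bar>\<sigma> * Astar a qstar y\<bar>" by simp
        also have "\<dots> = \<bar>Astar a qstar y\<bar>" by (simp add: abs_mult abs\<sigma>)
        also have "\<dots> \<le> 1" using qs_le1 y by simp
        finally show "Astar a (\<sigma> *\<^sub>R qstar) y \<le> Astar a (\<sigma> *\<^sub>R qstar) \<xi>" using \<sigma>A by (simp add: Astar_scale)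
      qed
      from differential_zero_maxmin[OF \<xi>O \<Omega>(1) Astar_deriv[of \<Omega> a, OF \<Omega>(1) a_C2 \<xi>O]] this
      have "(\<lambda>h. Gq a (\<sigma> *\<^sub>R qstar) \<xi> \<bullet> h) = (\<lambda>v. 0)" by blast
      then have "Gq a (\<sigma> *\<^sub>R qstar) \<xi> \<bullet> Gq a (\<sigma> *\<^sub>R qstar) \<xi> = 0" by metis
      then show ?thesis by simp
    qed
    have partB: "\<forall>x\<in>Xset a \<Omega> (qs k). \<forall>y\<in>Xset a \<Omega> (qs k).
                  norm (x - xi i) \<le> tau0 \<longrightarrow> norm (y - xi i) \<le> tau0 \<longrightarrow> x = y"
    proof (intro ballI impI)
      fix x y assume x: "x \<in> Xset a \<Omega> (qs k)" and y: "y \<in> Xset a \<Omega> (qs k)"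
        and nx: "norm (x - xi i) \<le> tau0" and ny: "norm (y - xi i) \<le> tau0"
      have xB: "x \<in> B" and yB: "y \<in> B" using x y nx ny inB \<xi>_def unfolding Xset_def by auto
      show "x = y"
      proof (rule ccontr)
        assume xy: "x \<noteq> y"
        obtain p where p: "p \<in> B" and eq: "(Gq a (\<sigma> *\<^sub>R qs k) y - Gq a (\<sigma> *\<^sub>R qs k) x) \<bullet> (y - x)
             = (y - x) \<bullet> Hq a (\<sigma> *\<^sub>R qs k) p (y - x)"
          using seg_mvt[of \<Omega> a, OF \<Omega>(1) a_C2 Bc BO xB yB] by blast
        have "(y - x) \<bullet> Hq a (\<sigma> *\<^sub>R qs k) p (y - x) = 0" using eq G0k[OF x xB] G0k[OF y yB] by simp
        moreover have "- (gamma - khess * n) * (norm (y - x))\<^sup>2 < 0"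
        proof -
          have "(norm (y - x))\<^sup>2 > 0" using xy by simp
          moreover have "gamma - khess * n > 0" using nh by simp
          ultimately have "(gamma - khess * n) * (norm (y - x))\<^sup>2 > 0" by (metis mult_pos_pos)
          then show ?thesis by (simp add: algebra_simps)
        qed
        ultimately show False using Hk[OF p, of "y - x"] by linarith
      qed
    qed
    have partC: "\<forall>z\<in>Xset a \<Omega> (qs k). norm (z - xi i) \<le> tau0 \<longrightarrow> norm (z - xi i) \<le> kgrad / gamma * n"
    proof (intro ballI impI)
      fix z assume z: "z \<in> Xset a \<Omega> (qs k)" and nz: "norm (z - xi i) \<le> tau0"
      have zB: "z \<in> B" using z nz inB \<xi>_def unfolding Xset_def by auto
      have zO: "z \<in> \<Omega>" using zB BO by auto
      define u where "u = z - \<xi>"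
      obtain p where p: "p \<in> B" and eq: "(Gq a (\<sigma> *\<^sub>R qstar) z - Gq a (\<sigma> *\<^sub>R qstar) \<xi>) \<bullet> (z - \<xi>)
             = (z - \<xi>) \<bullet> Hq a (\<sigma> *\<^sub>R qstar) p (z - \<xi>)"
        using seg_mvt[of \<Omega> a, OF \<Omega>(1) a_C2 Bc BO \<xi>B zB] by blast
      have "Gq a (\<sigma> *\<^sub>R qs k) z = Gq a (\<sigma> *\<^sub>R qstar) z + Gq a (\<sigma> *\<^sub>R D) z"
        by (simp add: \<sigma>qk Gq_add)
      then have Gs: "Gq a (\<sigma> *\<^sub>R qstar) z = - Gq a (\<sigma> *\<^sub>R D) z" using G0k[OF z zB] by (simp add: add_eq_0_iff)
      have "gamma * (norm u)\<^sup>2 \<le> Gq a (\<sigma> *\<^sub>R D) z \<bullet> u"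
        using eq Hstar[OF p, of u] G0s Gs by (simp add: u_def)
      also have "\<dots> \<le> norm (Gq a (\<sigma> *\<^sub>R D) z) * norm u" by (rule norm_cauchy_schwarz)
      also have "\<dots> \<le> kgrad * n * norm u"
        using GD[OF zO, of "\<sigma> *\<^sub>R D"] abs\<sigma> by (simp add: n_def mult_right_mono)
      finally have ineq: "gamma * (norm u)\<^sup>2 \<le> kgrad * n * norm u" .
      have "norm u \<le> kgrad / gamma * n"
      proof (cases "norm u = 0")
        case True then show ?thesis using kgp gamma n0 by simp
      next
        case False
        then have "norm u > 0" by simp
        with ineq have "gamma * norm u \<le> kgrad * n" by (simp add: power2_eq_square)
        then show ?thesis using gamma by (simp add: field_simps)
      qed
      then show "norm (z - xi i) \<le> kgrad / gamma * n" by (simp add: u_def \<xi>_def)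
    qed
    show ?thesis using partA partB partC by blast
  qed
  have hd: "hdist (xi ` {1..s}) (Xset a \<Omega> (qs k)) \<le> ereal (kgrad / gamma * n)"
    unfolding hdist_def
  proof (rule SUP_least)
    fix z assume z: "z \<in> Xset a \<Omega> (qs k)"
    obtain i where i: "i \<in> {1..s}" "norm (z - xi i) < tau0" using X_near[OF z] by blast
    have "norm (z - xi i) \<le> kgrad / gamma * n" using per_i[OF i(1)] z i(2) by auto
    then have "ereal (dist (xi i) z) \<le> ereal (kgrad / gamma * n)" by (simp add: dist_norm norm_minus_commute)
    then show "(INF y\<in>xi ` {1..s}. ereal (dist y z)) \<le> ereal (kgrad / gamma * n)"
      by (rule INF_lower2[OF imageI[OF i(1)]])
  qed
  show ?thesis using hd per_i unfolding n_def D_def by blast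
qed

end
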